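(* Let $R$ be an associative $\mathbb C$-algebra, let $r_1,r_2,\dots\in R$ and $r'_1,r'_2,\dots\in R$ be two sequences, and let $M_j,N_j$ (entries $\alpha_{j;a,b},\beta_{j;a,b}$) and $M'_j,N'_j$ (entries $\alpha'_{j;a,b},\beta'_{j;a,b}$) be the matrices determined by the recursion below from $(r_j)$ and $(r'_j)$ respectively. (1) If $\lambda\in\mathbb C$ and $r'_j=\lambda^jr_j$ for all $j$, then $\alpha'_{j;a,b}=\lambda^{a-b+1}\alpha_{j;a,b}$ and $\beta'_{j;a,b}=\lambda^{a-b+1}\beta_{j;a,b}$ for all $j\ge a\ge b\ge1$. (2) If $r\mapsto r^*$ is an anti-automorphism of the $\mathbb C$-algebra $R$ and $r'_j=r_j^*$ for all $j$, then $\alpha'_{j;a,b}=(\beta_{j;j-b+1,j-a+1})^*$ and $\beta'_{j;a,b}=(\alpha_{j;j-b+1,j-a+1})^*$ for all $j\ge a\ge b\ge1$.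
   Context: Notation: $E^{[m]}$ is the $m\times m$ matrix over $R$ with $1_R$ on the superdiagonal and $0$ elsewhere; $F^{[m]}$ has entry $i(m-i)\cdot1_R$ in position $(i+1,i)$ for $1\le i\le m-1$ and $0$ elsewhere. Recursion: given $r_1,r_2,\dots\in R$, there are unique matrices $M_j$ ($j\times(j+1)$) and $N_j$ ($(j+1)\times j$) over $R$, $j\ge0$, such that: (A) $M_j$ has $(a,a+1)$ entry $1_R$, $(a,b)$ entry $\alpha_{j;a,b}$ for $b\le a$, and $0$ for $b>a+1$; $N_j$ has $(a,a)$ entry $1_R$ for $a\le j$, $(a+1,b)$ entry $\beta_{j;a,b}$ for $1\le b\le a\le j$, and $0$ for $b>a$ (so $M_0$, $N_0$ are the empty $0\times1$, $1\times0$ matrices); (B) for all $j\ge1$, $M_jN_j=N_{j-1}M_{j-1}+X_j$, where $X_j$ is the $j\times j$ matrix whose only nonzero entry is $r_j$ in the lower-left corner; (C) for all $j\ge1$, $N_jM_j-E^{[j+1]}$ commutes with $F^{[j+1]}$. *)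

theory Defs
  imports Complex_Main
begin

text \<open>Matrices over R are modelled as functions nat => nat => R with 1-based
indices; only entries inside the stated dimensions are meaningful.\<close>

definition complex_algebra :: "(complex \<Rightarrow> 'a::ring_1 \<Rightarrow> 'a) \<Rightarrow> bool" where
  "complex_algebra smul \<longleftrightarrow>
     (\<forall>c x y. smul c (x + y) = smul c x + smul c y) \<and>
     (\<forall>c d x. smul (c + d) x = smul c x + smul d x) \<and>
     (\<forall>c d x. smul (c * d) x = smul c (smul d x)) \<and>
     (\<forall>x. smul 1 x = x) \<and>
     (\<forall>c x y. smul c (x * y) = smul c x * y) \<and>
     (\<forall>c x y. smul c (x * y) = x * smul c y)"

definition anti_automorphism :: "(complex \<Rightarrow> 'a::ring_1 \<Rightarrow> 'a) \<Rightarrow> ('a \<Rightarrow> 'a) \<Rightarrow> bool" where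
  "anti_automorphism smul st \<longleftrightarrow>
     bij st \<and>
     (\<forall>x y. st (x + y) = st x + st y) \<and>
     (\<forall>x y. st (x * y) = st y * st x) \<and>
     st 1 = 1 \<and>
     (\<forall>c x. st (smul c x) = smul c (st x))"

definition Emat :: "nat \<Rightarrow> nat \<Rightarrow> nat \<Rightarrow> 'a::ring_1" where
  "Emat m a b = (if b = a + 1 then 1 else 0)"

definition Fmat :: "nat \<Rightarrow> nat \<Rightarrow> nat \<Rightarrow> 'a::ring_1" where
  "Fmat m a b = (if a = b + 1 then of_nat (b * (m - b)) else 0)"

definition mmul :: "nat \<Rightarrow> (nat \<Rightarrow> nat \<Rightarrow> 'a::ring_1) \<Rightarrow> (nat \<Rightarrow> nat \<Rightarrow> 'a) \<Rightarrow> nat \<Rightarrow> nat \<Rightarrow> 'a" where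
  "mmul k A B a c = (\<Sum>b = 1..k. A a b * B b c)"

text \<open>Conditions (A), (B), (C) of the recursion for the sequence r (r 0 unused):
M j is j x (j+1), N j is (j+1) x j.\<close>
definition is_recursion_solution ::
  "(nat \<Rightarrow> 'a::ring_1) \<Rightarrow> (nat \<Rightarrow> nat \<Rightarrow> nat \<Rightarrow> 'a) \<Rightarrow> (nat \<Rightarrow> nat \<Rightarrow> nat \<Rightarrow> 'a) \<Rightarrow> bool" where
  "is_recursion_solution r M N \<longleftrightarrow>
     \<comment> \<open>(A)\<close>
     (\<forall>j a. 1 \<le> a \<and> a \<le> j \<longrightarrow> M j a (a + 1) = 1) \<and>
     (\<forall>j a b. 1 \<le> a \<and> a \<le> j \<and> a + 1 < b \<and> b \<le> j + 1 \<longrightarrow> M j a b = 0) \<and>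
     (\<forall>j a. 1 \<le> a \<and> a \<le> j \<longrightarrow> N j a a = 1) \<and>
     (\<forall>j a b. 1 \<le> a \<and> a \<le> j + 1 \<and> a < b \<and> b \<le> j \<longrightarrow> N j a b = 0) \<and>
     \<comment> \<open>(B)\<close>
     (\<forall>j a c. 1 \<le> j \<and> 1 \<le> a \<and> a \<le> j \<and> 1 \<le> c \<and> c \<le> j \<longrightarrow>
        mmul (j + 1) (M j) (N j) a c =
        mmul (j - 1) (N (j - 1)) (M (j - 1)) a c + (if a = j \<and> c = 1 then r j else 0)) \<and>
     \<comment> \<open>(C)\<close>
     (\<forall>j a c. 1 \<le> j \<and> 1 \<le> a \<and> a \<le> j + 1 \<and> 1 \<le> c \<and> c \<le> j + 1 \<longrightarrow>
        (let P = (\<lambda>x y. mmul j (N j) (M j) x y - Emat (j + 1) x y) in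
         mmul (j + 1) P (Fmat (j + 1)) a c = mmul (j + 1) (Fmat (j + 1)) P a c))"

end

theory Submission
  imports Defs
begin



definition PP :: "(nat \<Rightarrow> nat \<Rightarrow> nat \<Rightarrow> 'a::ring_1) \<Rightarrow> (nat \<Rightarrow> nat \<Rightarrow> nat \<Rightarrow> 'a) \<Rightarrow> nat \<Rightarrow> nat \<Rightarrow> nat \<Rightarrow> 'a" where
  "PP M N j = (\<lambda>x y. mmul j (N j) (M j) x y - Emat (j+1) x y)"

lemma rsM1: "is_recursion_solution r M N \<Longrightarrow> 1 \<le> a \<Longrightarrow> a \<le> j \<Longrightarrow> M j a (a+1) = 1"
  unfolding is_recursion_solution_def by blast
lemma rsM0: "is_recursion_solution r M N \<Longrightarrow> 1 \<le> a \<Longrightarrow> a \<le> j \<Longrightarrow> a+1 < b \<Longrightarrow> b \<le> j+1 \<Longrightarrow> M j a b = 0"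
  unfolding is_recursion_solution_def by blast
lemma rsN1: "is_recursion_solution r M N \<Longrightarrow> 1 \<le> a \<Longrightarrow> a \<le> j \<Longrightarrow> N j a a = 1"
  unfolding is_recursion_solution_def by blast
lemma rsN0: "is_recursion_solution r M N \<Longrightarrow> 1 \<le> a \<Longrightarrow> a \<le> j+1 \<Longrightarrow> a < b \<Longrightarrow> b \<le> j \<Longrightarrow> N j a b = 0"
  unfolding is_recursion_solution_def by blast
lemma rsB: "is_recursion_solution r M N \<Longrightarrow> 1 \<le> j \<Longrightarrow> 1 \<le> a \<Longrightarrow> a \<le> j \<Longrightarrow> 1 \<le> c \<Longrightarrow> c \<le> j \<Longrightarrow>
   mmul (j + 1) (M j) (N j) a c = mmul (j - 1) (N (j - 1)) (M (j - 1)) a c + (if a = j \<and> c = 1 then r j else 0)"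
  unfolding is_recursion_solution_def by blast
lemma rsC: "is_recursion_solution r M N \<Longrightarrow> 1 \<le> j \<Longrightarrow> 1 \<le> a \<Longrightarrow> a \<le> j+1 \<Longrightarrow> 1 \<le> c \<Longrightarrow> c \<le> j+1 \<Longrightarrow>
   mmul (j + 1) (PP M N j) (Fmat (j + 1)) a c = mmul (j + 1) (Fmat (j + 1)) (PP M N j) a c"
  unfolding is_recursion_solution_def PP_def Let_def by blast
lemma rs_intro:
  assumes "\<And>j a. 1 \<le> a \<Longrightarrow> a \<le> j \<Longrightarrow> M j a (a + 1) = 1"
    "\<And>j a b. 1 \<le> a \<Longrightarrow> a \<le> j \<Longrightarrow> a + 1 < b \<Longrightarrow> b \<le> j + 1 \<Longrightarrow> M j a b = 0"
    "\<And>j a. 1 \<le> a \<Longrightarrow> a \<le> j \<Longrightarrow> N j a a = 1"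
    "\<And>j a b. 1 \<le> a \<Longrightarrow> a \<le> j + 1 \<Longrightarrow> a < b \<Longrightarrow> b \<le> j \<Longrightarrow> N j a b = 0"
    "\<And>j a c. 1 \<le> j \<Longrightarrow> 1 \<le> a \<Longrightarrow> a \<le> j \<Longrightarrow> 1 \<le> c \<Longrightarrow> c \<le> j \<Longrightarrow>
        mmul (j + 1) (M j) (N j) a c =
        mmul (j - 1) (N (j - 1)) (M (j - 1)) a c + (if a = j \<and> c = 1 then r j else 0)"
    "\<And>j a c. 1 \<le> j \<Longrightarrow> 1 \<le> a \<Longrightarrow> a \<le> j + 1 \<Longrightarrow> 1 \<le> c \<Longrightarrow> c \<le> j + 1 \<Longrightarrow>
        mmul (j + 1) (PP M N j) (Fmat (j + 1)) a c = mmul (j + 1) (Fmat (j + 1)) (PP M N j) a c"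
  shows "is_recursion_solution r M N"
  unfolding is_recursion_solution_def Let_def
  apply (intro conjI allI impI)
       apply (elim conjE; rule assms(1); assumption)
      apply (elim conjE; rule assms(2); assumption)
     apply (elim conjE; rule assms(3); assumption)
    apply (elim conjE; rule assms(4); assumption)
   apply (elim conjE; rule assms(5); assumption)
  apply (elim conjE; rule assms(6)[unfolded PP_def]; assumption)
  done

lemma mmul_F_right:
  assumes "1 \<le> z" "z + 1 \<le> m"
  shows "mmul m P (Fmat m) x z = P x (z+1) * of_nat (z*(m-z))"
proof -
  have "mmul m P (Fmat m) x z = (\<Sum>b=1..m. if b = z+1 then P x (z+1) * of_nat (z*(m-z)) else 0)"
    unfolding mmul_def Fmat_def by (rule sum.cong) auto
  also have "\<dots> = P x (z+1) * of_nat (z*(m-z))" using assms by simp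
  finally show ?thesis .
qed

lemma mmul_F_left:
  assumes "2 \<le> x" "x \<le> m+1"
  shows "mmul m (Fmat m) P x z = of_nat ((x-1)*(m-(x-1))) * P (x-1) z"
proof -
  have "mmul m (Fmat m) P x z = (\<Sum>b=1..m. if b = x - 1 then of_nat ((x-1)*(m-(x-1))) * P (x-1) z else 0)"
    unfolding mmul_def Fmat_def by (rule sum.cong) auto
  also have "\<dots> = of_nat ((x-1)*(m-(x-1))) * P (x-1) z"
  proof -
    have mem: "x - 1 \<in> {1..m}" using assms by auto
    show ?thesis by (simp only: sum.delta finite_atLeastAtMost mem if_True)
  qed
  finally show ?thesis .
qed

lemma tele:
  fixes u v :: "nat \<Rightarrow> 'a::ab_group_add"
  shows "(\<Sum>y=1..n+1. (if y \<le> n then u y else 0) + (if 2 \<le> y then v (y-1) else 0)) = (\<Sum>y=1..n. u y + v y)"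
proof -
  have a: "(\<Sum>y=1..n+1. (if y \<le> n then u y else 0)) = (\<Sum>y=1..n. u y)"
    by (simp add: sum.cl_ivl_Suc)
  have "(\<Sum>y=1..n+1. (if 2 \<le> y then v (y-1) else 0)) = (\<Sum>y=Suc 1..Suc n. (if 2 \<le> y then v (y-1) else 0))"
    by (simp add: sum.atLeast_Suc_atMost)
  also have "\<dots> = (\<Sum>y=1..n. v y)"
    by (simp only: sum.shift_bounds_cl_Suc_ivl) simp
  finally show ?thesis using a by (simp add: sum.distrib)
qed

context fixes smul :: "complex \<Rightarrow> 'a::ring_1 \<Rightarrow> 'a" assumes CA: "complex_algebra smul"
begin

lemma sm_add: "smul c (x + y) = smul c x + smul c y" using CA unfolding complex_algebra_def by blast
lemma sm_addc: "smul (c + d) x = smul c x + smul d x" using CA unfolding complex_algebra_def by blast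
lemma sm_mult: "smul (c * d) x = smul c (smul d x)" using CA unfolding complex_algebra_def by blast
lemma sm_one: "smul 1 x = x" using CA unfolding complex_algebra_def by blast
lemma sm_ml: "smul c (x * y) = smul c x * y" using CA unfolding complex_algebra_def by blast
lemma sm_mr: "smul c (x * y) = x * smul c y" using CA unfolding complex_algebra_def by blast

lemma sm_zero: "smul c 0 = 0"
  using sm_add[of c 0 0] by simp
lemma sm_zeroc: "smul 0 x = 0"
  using sm_addc[of 0 0 x] by simp
lemma sm_of_nat: "smul (of_nat n) x = of_nat n * x"
  by (induction n) (simp_all add: sm_zeroc sm_addc sm_one distrib_right)
lemma sm_sumc: "smul (sum g A) x = (\<Sum>i\<in>A. smul (g i) x)"
  by (induction A rule: infinite_finite_induct) (simp_all add: sm_zeroc sm_addc)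
lemma sm_sum: "smul c (sum f A) = (\<Sum>i\<in>A. smul c (f i))"
  by (induction A rule: infinite_finite_induct) (simp_all add: sm_zero sm_add)
lemma sm_diff: "smul c (x - y) = smul c x - smul c y"
  using sm_add[of c "x - y" y] by (simp add: algebra_simps)
lemma sm_prod: "smul c x * smul d y = smul (c * d) (x * y)"
proof -
  have "smul c x * smul d y = smul c (x * smul d y)" by (rule sm_ml[symmetric])
  also have "x * smul d y = smul d (x * y)" by (rule sm_mr[symmetric])
  finally show ?thesis by (simp add: sm_mult)
qed
lemma sm_cancel: assumes "c \<noteq> 0" "smul c x = 0" shows "x = 0"
proof -
  have "x = smul (1/c * c) x" using assms by (simp add: sm_one)
  also have "\<dots> = smul (1/c) (smul c x)" by (rule sm_mult)
  also have "\<dots> = 0" using assms by (simp add: sm_zero)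
  finally show ?thesis .
qed
lemma sm_ofnat_r: "smul c x * of_nat n = smul c (x * of_nat n)" by (simp add: sm_ml)
lemma sm_ofnat_l: "of_nat n * smul c x = smul c (of_nat n * x)" by (simp add: sm_mr)

lemma scal_arg:
  fixes p :: "nat \<Rightarrow> 'a" and f h :: "nat \<Rightarrow> nat"
  assumes rec: "\<And>z. 1 \<le> z \<Longrightarrow> z \<le> n \<Longrightarrow> p (Suc z) * of_nat (f z) = of_nat (h z) * p z"
    and pos: "\<And>z. 1 \<le> z \<Longrightarrow> z \<le> n \<Longrightarrow> f z > 0 \<and> h z > 0"
    and sum0: "(\<Sum>y=1..n+1. p y) = 0"
  shows "\<And>y. 1 \<le> y \<Longrightarrow> y \<le> n+1 \<Longrightarrow> p y = 0"
proof -
  define g :: "nat \<Rightarrow> real" where "g y = (\<Prod>z\<in>{1..<y}. real (h z) / real (f z))" for y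
  have gpos: "g y > 0" if "y \<le> n+1" for y
    unfolding g_def using that pos by (intro prod_pos) auto
  have pg: "p y = smul (of_real (g y)) (p 1)" if "1 \<le> y" "y \<le> n+1" for y
    using that
  proof (induction y)
    case 0 then show ?case by simp
  next
    case (Suc z)
    show ?case
    proof (cases "z = 0")
      case True then show ?thesis by (simp add: g_def sm_one)
    next
      case False
      then have z1: "1 \<le> z" "z \<le> n" using Suc by auto
      then have fz: "f z > 0" "h z > 0" using pos by auto
      have IH: "p z = smul (of_real (g z)) (p 1)" using Suc z1 by auto
      have "p (Suc z) = smul (1 / of_nat (f z) * of_nat (f z)) (p (Suc z))"
        using fz by (simp add: sm_one)
      also have "\<dots> = smul (1 / of_nat (f z)) (smul (of_nat (f z)) (p (Suc z)))"
        by (rule sm_mult)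
      also have "\<dots> = smul (1 / of_nat (f z)) (p (Suc z) * of_nat (f z))"
        by (simp only: sm_of_nat mult_of_nat_commute)
      also have "\<dots> = smul (1 / of_nat (f z)) (smul (of_nat (h z)) (p z))"
        using rec[OF z1] by (simp add: sm_of_nat)
      also have "\<dots> = smul (1 / of_nat (f z) * of_nat (h z) * of_real (g z)) (p 1)"
        by (simp only: IH sm_mult[symmetric] mult.assoc)
      also have "1 / of_nat (f z) * of_nat (h z) * of_real (g z) = (of_real (g (Suc z)) :: complex)"
        using z1 by (simp add: g_def prod.atLeastLessThan_Suc)
      finally show ?thesis .
    qed
  qed
  have "0 = (\<Sum>y=1..n+1. smul (of_real (g y)) (p 1))"
    using sum0 pg by (metis (no_types, lifting) atLeastAtMost_iff sum.cong)
  also have "\<dots> = smul (of_real (\<Sum>y=1..n+1. g y)) (p 1)"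
    unfolding of_real_sum sm_sumc ..
  finally have s: "smul (of_real (\<Sum>y=1..n+1. g y)) (p 1) = 0" by simp
  have "(\<Sum>y=1..n+1. g y) > 0" by (intro sum_pos) (auto intro: gpos)
  then have "(\<Sum>y=1..n+1. g y) \<noteq> 0" by (rule less_imp_neq[symmetric])
  then have "complex_of_real (\<Sum>y=1..n+1. g y) \<noteq> 0" by (simp only: of_real_eq_0_iff not_False_eq_True)
  from sm_cancel[OF this s] have "p 1 = 0" .
  then show "\<And>y. 1 \<le> y \<Longrightarrow> y \<le> n+1 \<Longrightarrow> p y = 0"
  proof -
    fix y assume "1 \<le> y" "y \<le> n+1"
    from pg[OF this] \<open>p 1 = 0\<close> show "p y = 0" by (simp only: sm_zero)
  qed
qed


lemma uniq_step:
  fixes M N M' N' :: "nat \<Rightarrow> nat \<Rightarrow> nat \<Rightarrow> 'a"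
  assumes S1: "is_recursion_solution r M N" and S2: "is_recursion_solution r M' N'"
    and Q: "\<And>a c. 1\<le>a \<Longrightarrow> a\<le>j \<Longrightarrow> 1\<le>c \<Longrightarrow> c\<le>j \<Longrightarrow>
          mmul (j-1) (N (j-1)) (M (j-1)) a c = mmul (j-1) (N' (j-1)) (M' (j-1)) a c"
    and j1: "1 \<le> j"
    and IHM: "\<And>a b. 1\<le>a \<Longrightarrow> a\<le>j \<Longrightarrow> 1\<le>b \<Longrightarrow> b\<le>j+1 \<Longrightarrow> a < b+e \<Longrightarrow> M j a b = M' j a b"
    and IHN: "\<And>x b. 1\<le>x \<Longrightarrow> x\<le>j+1 \<Longrightarrow> 1\<le>b \<Longrightarrow> b\<le>j \<Longrightarrow> x < b+e+1 \<Longrightarrow> N j x b = N' j x b"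
    and ej: "e < j"
  shows "\<forall>c. 1 \<le> c \<and> c+e \<le> j \<longrightarrow> M j (c+e) c = M' j (c+e) c \<and> N j (c+e+1) c = N' j (c+e+1) c"
proof -
  define n where "n = j - e"
  have n1: "1 \<le> n" "n + e = j" using ej by (auto simp: n_def)
  define u where "u c = M j (c+e) c - M' j (c+e) c" for c
  define v where "v c = N j (c+e+1) c - N' j (c+e+1) c" for c
  have uv: "u c + v c = 0" if c: "1 \<le> c" "c \<le> n" for c
  proof -
    have t: "M j (c+e) b * N j b c - M' j (c+e) b * N' j b c
        = (if b = c then u c else 0) + (if b = c+e+1 then v c else 0)" if b: "b \<in> {1..j+1}" for b
    proof -
      consider "b < c" | "b = c" | "c < b \<and> b \<le> c+e" | "b = c+e+1" | "c+e+1 < b" by linarith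
      then show ?thesis
      proof cases
        case 1 then have "N j b c = 0" "N' j b c = 0" using b c n1 rsN0[OF S1] rsN0[OF S2] by auto
        then show ?thesis using 1 by simp
      next
        case 2 then have "N j b c = 1" "N' j b c = 1" using c n1 rsN1[OF S1] rsN1[OF S2] by auto
        then show ?thesis using 2 by (simp add: u_def)
      next
        case 3 then have "M j (c+e) b = M' j (c+e) b" "N j b c = N' j b c" using b c n1 IHM[of "c+e" b] IHN[of b c]
          by auto
        then show ?thesis using 3 by simp
      next
        case 4 then have "M j (c+e) b = 1" "M' j (c+e) b = 1" using c n1 rsM1[OF S1] rsM1[OF S2] by auto
        then show ?thesis using 4 by (simp add: v_def)
      next
        case 5 then have "M j (c+e) b = 0" "M' j (c+e) b = 0" using b c n1 rsM0[OF S1] rsM0[OF S2] by auto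
        then show ?thesis using 5 by simp
      qed
    qed
    have "mmul (j+1) (M j) (N j) (c+e) c - mmul (j+1) (M' j) (N' j) (c+e) c
       = (\<Sum>b=1..j+1. (if b = c then u c else 0) + (if b = c+e+1 then v c else 0))"
      unfolding mmul_def sum_subtractf[symmetric] using t by (intro sum.cong) auto
    also have "\<dots> = u c + v c" using c n1 by (simp add: sum.distrib)
    finally have d: "u c + v c = mmul (j+1) (M j) (N j) (c+e) c - mmul (j+1) (M' j) (N' j) (c+e) c" ..
    have "mmul (j+1) (M j) (N j) (c+e) c = mmul (j+1) (M' j) (N' j) (c+e) c"
      using rsB[OF S1 j1, of "c+e" c] rsB[OF S2 j1, of "c+e" c] Q[of "c+e" c] c n1 by auto
    then show ?thesis using d by simp
  qed
  define p where "p y = mmul j (N j) (M j) (y+e) y - mmul j (N' j) (M' j) (y+e) y" for y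
  have pform: "p y = (if y \<le> n then u y else 0) + (if 2 \<le> y then v (y-1) else 0)"
    if y: "1 \<le> y" "y \<le> n+1" for y
  proof -
    have t: "N j (y+e) b * M j b y - N' j (y+e) b * M' j b y
        = (if b = y+e then u y else 0) + (if b = y - 1 then v (y-1) else 0)" if b: "b \<in> {1..j}" for b
    proof -
      consider "b+1 < y" | "b+1 = y" | "y \<le> b \<and> b < y+e" | "b = y+e" | "y+e < b" by linarith
      then show ?thesis
      proof cases
        case 1 then have "M j b y = 0" "M' j b y = 0" using b y n1 rsM0[OF S1] rsM0[OF S2] by auto
        then show ?thesis using 1 by auto
      next
        case 2 then have yb: "y = Suc b" by simp
        have "M j b y = 1" "M' j b y = 1" using b yb rsM1[OF S1] rsM1[OF S2] by auto
        then show ?thesis using yb by (simp add: v_def)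
      next
        case 3 then have "N j (y+e) b = N' j (y+e) b" "M j b y = M' j b y" using b y n1 IHN[of "y+e" b] IHM[of b y]
          by auto
        moreover have "b \<noteq> y + e" "b \<noteq> y - 1" using 3 y by linarith+
        ultimately show ?thesis by simp
      next
        case 4 then have "N j (y+e) b = 1" "N' j (y+e) b = 1" using b rsN1[OF S1] rsN1[OF S2] by auto
        moreover have "b \<noteq> y - 1" using 4 y by linarith
        ultimately show ?thesis using 4 by (simp add: u_def)
      next
        case 5 then have "N j (y+e) b = 0" "N' j (y+e) b = 0" using b y n1 rsN0[OF S1] rsN0[OF S2] by auto
        moreover have "b \<noteq> y + e" "b \<noteq> y - 1" using 5 y by linarith+
        ultimately show ?thesis by simp
      qed
    qed
    have "p y = (\<Sum>b=1..j. (if b = y+e then u y else 0) + (if b = y - 1 then v (y-1) else 0))"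
      unfolding p_def mmul_def sum_subtractf[symmetric] using t by (intro sum.cong) auto
    also have "\<dots> = (if y \<le> n then u y else 0) + (if 2 \<le> y then v (y-1) else 0)"
      using y n1 by (auto simp add: sum.distrib)
    finally show ?thesis .
  qed
  have rec: "p (Suc z) * of_nat (z*(j+1-z)) = of_nat ((z+e)*(j+1-(z+e))) * p z"
    if z: "1 \<le> z" "z \<le> n" for z
  proof -
    have C: "PP M N j (z+e+1) (z+1) * of_nat (z*(j+1-z)) = of_nat ((z+e)*(j+1-(z+e))) * PP M N j (z+e) z"
      if S: "is_recursion_solution r M N" for M N :: "nat \<Rightarrow> nat \<Rightarrow> nat \<Rightarrow> 'a"
    proof -
      have "mmul (j + 1) (PP M N j) (Fmat (j + 1)) (z+e+1) z = mmul (j + 1) (Fmat (j + 1)) (PP M N j) (z+e+1) z"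
        using rsC[OF S j1, of "z+e+1" z] z n1 by auto
      moreover have "mmul (j + 1) (PP M N j) (Fmat (j + 1)) (z+e+1) z = PP M N j (z+e+1) (z+1) * of_nat (z*(j+1-z))"
        using mmul_F_right[of z "j+1"] z n1 by simp
      moreover have "mmul (j + 1) (Fmat (j + 1)) (PP M N j) (z+e+1) z = of_nat ((z+e)*(j+1-(z+e))) * PP M N j (z+e) z"
        using mmul_F_left[of "z+e+1" "j+1"] z n1 by simp
      ultimately show ?thesis by simp
    qed
    have e1: "Emat (j+1) (z+e+1) (z+1) = (0::'a)" "Emat (j+1) (z+e) z = (0::'a)" by (auto simp: Emat_def)
    have A: "mmul j (N j) (M j) (z+e+1) (z+1) * of_nat (z*(j+1-z)) = of_nat ((z+e)*(j+1-(z+e))) * mmul j (N j) (M j) (z+e) z"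
      using C[OF S1] e1 by (simp add: PP_def)
    have B: "mmul j (N' j) (M' j) (z+e+1) (z+1) * of_nat (z*(j+1-z)) = of_nat ((z+e)*(j+1-(z+e))) * mmul j (N' j) (M' j) (z+e) z"
      using C[OF S2] e1 by (simp add: PP_def)
    have "p (Suc z) = mmul j (N j) (M j) (z+e+1) (z+1) - mmul j (N' j) (M' j) (z+e+1) (z+1)"
      by (simp add: p_def)
    then show ?thesis using A B by (simp add: p_def left_diff_distrib right_diff_distrib)
  qed
  have sum0: "(\<Sum>y=1..n+1. p y) = 0"
  proof -
    have "(\<Sum>y=1..n+1. p y) = (\<Sum>y=1..n+1. (if y \<le> n then u y else 0) + (if 2 \<le> y then v (y-1) else 0))"
      using pform by (intro sum.cong) auto
    also have "\<dots> = (\<Sum>y=1..n. u y + v y)" by (rule tele)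
    also have "\<dots> = 0" using uv by (intro sum.neutral) auto
    finally show ?thesis .
  qed
  have pz: "\<And>y. 1 \<le> y \<Longrightarrow> y \<le> n+1 \<Longrightarrow> p y = 0"
  proof (rule scal_arg[of n p "\<lambda>z. z*(j+1-z)" "\<lambda>z. (z+e)*(j+1-(z+e))"])
    show "\<And>z. 1 \<le> z \<Longrightarrow> z \<le> n \<Longrightarrow> p (Suc z) * of_nat (z*(j+1-z)) = of_nat ((z+e)*(j+1-(z+e))) * p z"
      by (rule rec)
    show "\<And>z. 1 \<le> z \<Longrightarrow> z \<le> n \<Longrightarrow> 0 < z*(j+1-z) \<and> 0 < (z+e)*(j+1-(z+e))"
      using n1 by auto
    show "(\<Sum>y=1..n+1. p y) = 0" by (rule sum0)
  qed
  have u0: "u y = 0" if "1 \<le> y" "y \<le> n" for y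
    using that
  proof (induction y)
    case 0 then show ?case by simp
  next
    case (Suc y)
    show ?case
    proof (cases "y = 0")
      case True then show ?thesis using pform[of 1] pz[of 1] Suc by simp
    next
      case False
      then have "u y = 0" using Suc by auto
      moreover have "v y = - u y" using uv[of y] Suc False by (simp add: eq_neg_iff_add_eq_0)
      moreover have "p (Suc y) = u (Suc y) + v y"
        using pform[of "Suc y"] Suc False by (simp del: One_nat_def)
      ultimately show ?thesis using pz[of "Suc y"] Suc by simp
    qed
  qed
  show ?thesis
  proof (intro allI impI)
    fix c assume c: "1 \<le> c \<and> c+e \<le> j"
    have cn: "1 \<le> c" "c \<le> n" using c n1 by linarith+
    have "u c = 0" by (rule u0[OF cn])
    moreover have "u c + v c = 0" by (rule uv[OF cn])
    ultimately have "u c = 0" "v c = 0" by simp_all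
    then have h1: "u c = 0" and h2: "v c = 0" by blast+
    have "M j (c+e) c - M' j (c+e) c = 0" using h1 unfolding u_def .
    moreover have "N j (c+e+1) c - N' j (c+e+1) c = 0" using h2 unfolding v_def .
    ultimately show "M j (c+e) c = M' j (c+e) c \<and> N j (c+e+1) c = N' j (c+e+1) c"
      by (simp only: right_minus_eq)
  qed
qed

lemma uniq:
  fixes M N M' N' :: "nat \<Rightarrow> nat \<Rightarrow> nat \<Rightarrow> 'a"
  assumes S1: "is_recursion_solution r M N" and S2: "is_recursion_solution r M' N'"
  shows "(\<forall>a b. 1\<le>a \<and> a\<le>j \<and> 1\<le>b \<and> b\<le>j+1 \<longrightarrow> M j a b = M' j a b) \<and>
         (\<forall>x b. 1\<le>x \<and> x\<le>j+1 \<and> 1\<le>b \<and> b\<le>j \<longrightarrow> N j x b = N' j x b)"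
proof (induction j rule: less_induct)
  case (less j)
  show ?case
  proof (cases "j = 0")
    case True then show ?thesis by auto
  next
    case False
    then have j1: "1 \<le> j" by simp
    have Q: "mmul (j-1) (N (j-1)) (M (j-1)) a c = mmul (j-1) (N' (j-1)) (M' (j-1)) a c"
      if "1\<le>a" "a\<le>j" "1\<le>c" "c\<le>j" for a c
    proof -
      have IH: "(\<forall>a b. 1\<le>a \<and> a\<le>j-1 \<and> 1\<le>b \<and> b\<le>j-1+1 \<longrightarrow> M (j-1) a b = M' (j-1) a b) \<and>
         (\<forall>x b. 1\<le>x \<and> x\<le>j-1+1 \<and> 1\<le>b \<and> b\<le>j-1 \<longrightarrow> N (j-1) x b = N' (j-1) x b)"
        using less.IH[of "j-1"] j1 by simp
      have IHM: "M (j-1) b c = M' (j-1) b c" if "b \<in> {1..j-1}" for b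
        using IH[THEN conjunct1, rule_format, of b c] that \<open>1\<le>c\<close> \<open>c\<le>j\<close> j1 by simp
      have IHN: "N (j-1) a b = N' (j-1) a b" if "b \<in> {1..j-1}" for b
        using IH[THEN conjunct2, rule_format, of a b] that \<open>1\<le>a\<close> \<open>a\<le>j\<close> j1 by simp
      show ?thesis unfolding mmul_def
        using IHM IHN by (intro sum.cong) auto
    qed
    have inner: "(\<forall>a b. 1\<le>a \<and> a\<le>j \<and> 1\<le>b \<and> b\<le>j+1 \<and> a < b+e \<longrightarrow> M j a b = M' j a b) \<and>
        (\<forall>x b. 1\<le>x \<and> x\<le>j+1 \<and> 1\<le>b \<and> b\<le>j \<and> x < b+e+1 \<longrightarrow> N j x b = N' j x b)" for e
    proof (induction e)
      case 0
      have "M j a b = M' j a b" if "1\<le>a" "a\<le>j" "1\<le>b" "b\<le>j+1" "a < b" for a b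
      proof (cases "b = a+1")
        case True then show ?thesis using that rsM1[OF S1] rsM1[OF S2] by simp
      next
        case False then show ?thesis using that rsM0[OF S1, of a j b] rsM0[OF S2, of a j b] by simp
      qed
      moreover have "N j x b = N' j x b" if "1\<le>x" "x\<le>j+1" "1\<le>b" "b\<le>j" "x < b+1" for x b
      proof (cases "x = b")
        case True then show ?thesis using that rsN1[OF S1] rsN1[OF S2] by simp
      next
        case False then show ?thesis using that rsN0[OF S1, of x j b] rsN0[OF S2, of x j b] by simp
      qed
      ultimately show ?case by auto
    next
      case (Suc e)
      have IHM: "\<And>a b. 1\<le>a \<Longrightarrow> a\<le>j \<Longrightarrow> 1\<le>b \<Longrightarrow> b\<le>j+1 \<Longrightarrow> a < b+e \<Longrightarrow> M j a b = M' j a b"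
        using Suc.IH by blast
      have IHN: "\<And>x b. 1\<le>x \<Longrightarrow> x\<le>j+1 \<Longrightarrow> 1\<le>b \<Longrightarrow> b\<le>j \<Longrightarrow> x < b+e+1 \<Longrightarrow> N j x b = N' j x b"
        using Suc.IH by blast
      have st0: "e < j \<Longrightarrow> \<forall>c. 1 \<le> c \<and> c+e \<le> j \<longrightarrow> M j (c+e) c = M' j (c+e) c \<and> N j (c+e+1) c = N' j (c+e+1) c"
        by (rule uniq_step[OF S1 S2 Q j1 IHM IHN])
      have st: "M j (c+e) c = M' j (c+e) c \<and> N j (c+e+1) c = N' j (c+e+1) c" if "1 \<le> c" "c+e \<le> j" for c
      proof -
        have "e < j" using that by linarith
        then show ?thesis using st0 that by blast
      qed
      have "M j a b = M' j a b" if "1\<le>a" "a\<le>j" "1\<le>b" "b\<le>j+1" "a < b+Suc e" for a b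
      proof (cases "a < b + e")
        case True then show ?thesis using IHM that by blast
      next
        case False then have "a = b + e" using that by simp
        then show ?thesis using st[of b] that by simp
      qed
      moreover have "N j x b = N' j x b" if "1\<le>x" "x\<le>j+1" "1\<le>b" "b\<le>j" "x < b+Suc e+1" for x b
      proof (cases "x < b + e + 1")
        case True then show ?thesis using IHN that by blast
      next
        case False then have "x = b + e + 1" using that by simp
        then show ?thesis using st[of b] that by simp
      qed
      ultimately show ?case by blast
    qed
    show ?thesis using inner[of "j+1"] by auto
  qed
qed


lemma mmul_scaled:
  assumes "\<And>b. b \<in> {1..k} \<Longrightarrow> A2 a b = smul (lam ^ x b) (A a b)"
    "\<And>b. b \<in> {1..k} \<Longrightarrow> B2 b c = smul (lam ^ y b) (B b c)"
    "\<And>b. b \<in> {1..k} \<Longrightarrow> A a b * B b c = 0 \<or> x b + y b = z"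
  shows "mmul k A2 B2 a c = smul (lam ^ z) (mmul k A B a c)"
  unfolding mmul_def sm_sum
proof (rule sum.cong)
  fix b assume b: "b \<in> {1..k}"
  have "A2 a b * B2 b c = smul (lam ^ x b * lam ^ y b) (A a b * B b c)"
    using assms(1,2)[OF b] by (simp add: sm_prod)
  also have "\<dots> = smul (lam ^ z) (A a b * B b c)"
    using assms(3)[OF b] by (auto simp: sm_zero power_add[symmetric])
  finally show "A2 a b * B2 b c = smul (lam ^ z) (A a b * B b c)" .
qed simp

lemma scaled_sol:
  fixes M N :: "nat \<Rightarrow> nat \<Rightarrow> nat \<Rightarrow> 'a"
  assumes S: "is_recursion_solution r M N" and rr: "\<forall>j\<ge>1. r' j = smul (lam ^ j) (r j)"
  shows "is_recursion_solution r' (\<lambda>j a b. smul (lam ^ (a+1-b)) (M j a b)) (\<lambda>j a b. smul (lam ^ (a-b)) (N j a b))"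
proof (rule rs_intro)
  show "\<And>j a. 1 \<le> a \<Longrightarrow> a \<le> j \<Longrightarrow> smul (lam ^ (a+1-(a+1))) (M j a (a + 1)) = 1"
    using rsM1[OF S] by (simp add: sm_one)
  show "\<And>j a b. 1 \<le> a \<Longrightarrow> a \<le> j \<Longrightarrow> a + 1 < b \<Longrightarrow> b \<le> j + 1 \<Longrightarrow> smul (lam ^ (a+1-b)) (M j a b) = 0"
    using rsM0[OF S] by (simp add: sm_zero)
  show "\<And>j a. 1 \<le> a \<Longrightarrow> a \<le> j \<Longrightarrow> smul (lam ^ (a-a)) (N j a a) = 1"
    using rsN1[OF S] by (simp add: sm_one)
  show "\<And>j a b. 1 \<le> a \<Longrightarrow> a \<le> j + 1 \<Longrightarrow> a < b \<Longrightarrow> b \<le> j \<Longrightarrow> smul (lam ^ (a-b)) (N j a b) = 0"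
    using rsN0[OF S] by (simp add: sm_zero)
next
  fix j a c :: nat assume j: "1 \<le> j" and a: "1 \<le> a" "a \<le> j" and c: "1 \<le> c" "c \<le> j"
  have L: "mmul (j + 1) (\<lambda>a b. smul (lam ^ (a+1-b)) (M j a b)) (\<lambda>a b. smul (lam ^ (a-b)) (N j a b)) a c
      = smul (lam ^ (a+1-c)) (mmul (j+1) (M j) (N j) a c)"
  proof (rule mmul_scaled[where x = "\<lambda>b. a+1-b" and y = "\<lambda>b. b - c"])
    fix b assume b: "b \<in> {1..j+1}"
    show "M j a b * N j b c = 0 \<or> a + 1 - b + (b - c) = a + 1 - c"
    proof (cases "b < c")
      case True then have "N j b c = 0" using rsN0[OF S, of b j c] b c by auto
      then show ?thesis by simp
    next
      case False
      show ?thesis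
      proof (cases "a + 1 < b")
        case True then have "M j a b = 0" using rsM0[OF S, of a j b] a b by auto
        then show ?thesis by simp
      next
        case False2: False
        then show ?thesis using False by auto
      qed
    qed
  qed auto
  have R: "mmul (j - 1) (\<lambda>a b. smul (lam ^ (a-b)) (N (j-1) a b)) (\<lambda>a b. smul (lam ^ (a+1-b)) (M (j-1) a b)) a c
      = smul (lam ^ (a+1-c)) (mmul (j-1) (N (j-1)) (M (j-1)) a c)"
  proof (rule mmul_scaled[where x = "\<lambda>b. a-b" and y = "\<lambda>b. b+1-c"])
    fix b assume b: "b \<in> {1..j-1}"
    show "N (j-1) a b * M (j-1) b c = 0 \<or> a - b + (b + 1 - c) = a + 1 - c"
    proof (cases "a < b")
      case True then have "N (j-1) a b = 0" using rsN0[OF S, of a "j-1" b] a b j by auto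
      then show ?thesis by simp
    next
      case False
      show ?thesis
      proof (cases "b + 1 < c")
        case True then have "M (j-1) b c = 0" using rsM0[OF S, of b "j-1" c] b c j by auto
        then show ?thesis by simp
      next
        case False2: False
        then show ?thesis using False by auto
      qed
    qed
  qed auto
  have X: "smul (lam ^ (a+1-c)) (if a = j \<and> c = 1 then r j else 0) = (if a = j \<and> c = 1 then r' j else 0)"
    using rr j by (auto simp: sm_zero)
  show "mmul (j + 1) (\<lambda>a b. smul (lam ^ (a+1-b)) (M j a b)) (\<lambda>a b. smul (lam ^ (a-b)) (N j a b)) a c =
        mmul (j - 1) (\<lambda>a b. smul (lam ^ (a-b)) (N (j-1) a b)) (\<lambda>a b. smul (lam ^ (a+1-b)) (M (j-1) a b)) a c +
        (if a = j \<and> c = 1 then r' j else 0)"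
    unfolding L R X[symmetric] rsB[OF S j a c] sm_add ..
next
  fix j a c :: nat assume j: "1 \<le> j" and a: "1 \<le> a" "a \<le> j+1" and c: "1 \<le> c" "c \<le> j+1"
  define M2 where "M2 = (\<lambda>j a b. smul (lam ^ (a+1-b)) (M j a b))"
  define N2 where "N2 = (\<lambda>j a b. smul (lam ^ (a-b)) (N j a b))"
  have P: "PP M2 N2 j x y = smul (lam ^ (x+1-y)) (PP M N j x y)" if x: "1 \<le> x" "x \<le> j+1" and y: "1 \<le> y" "y \<le> j+1" for x y
  proof -
    have "mmul j (N2 j) (M2 j) x y = smul (lam ^ (x+1-y)) (mmul j (N j) (M j) x y)"
      unfolding M2_def N2_def
    proof (rule mmul_scaled[where x = "\<lambda>b. x-b" and y = "\<lambda>b. b+1-y"])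
      fix b assume b: "b \<in> {1..j}"
      show "N j x b * M j b y = 0 \<or> x - b + (b + 1 - y) = x + 1 - y"
      proof (cases "x < b")
        case True then have "N j x b = 0" using rsN0[OF S, of x j b] x b by auto
        then show ?thesis by simp
      next
        case False
        show ?thesis
        proof (cases "b + 1 < y")
          case True then have "M j b y = 0" using rsM0[OF S, of b j y] b y by auto
          then show ?thesis by simp
        next
          case False2: False
          then show ?thesis using False by auto
        qed
      qed
    qed auto
    moreover have "Emat (j+1) x y = smul (lam ^ (x+1-y)) (Emat (j+1) x y)"
      by (auto simp: Emat_def sm_one sm_zero)
    ultimately show ?thesis unfolding PP_def sm_diff by simp
  qed
  have FL: "mmul (j+1) (PP M2 N2 j) (Fmat (j+1)) a c = smul (lam ^ (a-c)) (mmul (j+1) (PP M N j) (Fmat (j+1)) a c)"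
  proof (rule mmul_scaled[where x = "\<lambda>b. a+1-b" and y = "\<lambda>b. 0"])
    fix b assume b: "b \<in> {1..j+1}"
    show "PP M2 N2 j a b = smul (lam ^ (a+1-b)) (PP M N j a b)" using P[of a b] a b by auto
    show "Fmat (j+1) b c = smul (lam ^ 0) (Fmat (j+1) b c)" by (simp add: sm_one)
    show "PP M N j a b * Fmat (j+1) b c = 0 \<or> a + 1 - b + 0 = a - c"
      by (auto simp: Fmat_def)
  qed
  have FR: "mmul (j+1) (Fmat (j+1)) (PP M2 N2 j) a c = smul (lam ^ (a-c)) (mmul (j+1) (Fmat (j+1)) (PP M N j) a c)"
  proof (rule mmul_scaled[where x = "\<lambda>b. 0" and y = "\<lambda>b. b+1-c"])
    fix b assume b: "b \<in> {1..j+1}"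
    show "Fmat (j+1) a b = smul (lam ^ 0) (Fmat (j+1) a b)" by (simp add: sm_one)
    show "PP M2 N2 j b c = smul (lam ^ (b+1-c)) (PP M N j b c)" using P[of b c] c b by auto
    show "Fmat (j+1) a b * PP M N j b c = 0 \<or> 0 + (b + 1 - c) = a - c"
      by (auto simp: Fmat_def)
  qed
  show "mmul (j+1) (PP M2 N2 j) (Fmat (j+1)) a c = mmul (j+1) (Fmat (j+1)) (PP M2 N2 j) a c"
    unfolding FL FR rsC[OF S j a c] ..
qed

end

context fixes smul :: "complex \<Rightarrow> 'a::ring_1 \<Rightarrow> 'a" and st :: "'a \<Rightarrow> 'a"
  assumes AA: "anti_automorphism smul st"
begin

lemma st_add: "st (x + y) = st x + st y" using AA unfolding anti_automorphism_def by blast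
lemma st_mult: "st (x * y) = st y * st x" using AA unfolding anti_automorphism_def by blast
lemma st_one: "st 1 = 1" using AA unfolding anti_automorphism_def by blast
lemma st_zero: "st 0 = 0" using st_add[of 0 0] by simp
lemma st_sum: "st (sum f A) = (\<Sum>i\<in>A. st (f i))"
  by (induction A rule: infinite_finite_induct) (simp_all add: st_zero st_add)
lemma st_diff: "st (x - y) = st x - st y"
  using st_add[of "x - y" y] by (simp add: algebra_simps)
lemma st_of_nat: "st (of_nat n) = of_nat n"
  by (induction n) (simp_all add: st_zero st_add st_one)

lemma mmul_st:
  assumes "\<And>b. b \<in> {1..k} \<Longrightarrow> A2 a b = st (B' (k+1-b) a')"
    "\<And>b. b \<in> {1..k} \<Longrightarrow> B2 b c = st (A' c' (k+1-b))"
  shows "mmul k A2 B2 a c = st (mmul k A' B' c' a')"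
proof -
  have "mmul k A2 B2 a c = (\<Sum>b=1..k. st (A' c' (k+1-b) * B' (k+1-b) a'))"
    unfolding mmul_def using assms by (intro sum.cong) (simp_all add: st_mult)
  also have "\<dots> = st (\<Sum>b=1..k. A' c' (k+1-b) * B' (k+1-b) a')" by (simp add: st_sum)
  also have "(\<Sum>b=1..k. A' c' (k+1-b) * B' (k+1-b) a') = (\<Sum>b=1..k. A' c' b * B' b a')"
    using sum.atLeastAtMost_rev[of "\<lambda>b. A' c' b * B' b a'" 1 k] by simp
  finally show ?thesis unfolding mmul_def .
qed

lemma Fmat_sym: "1 \<le> b \<Longrightarrow> b \<le> m \<Longrightarrow> 1 \<le> c \<Longrightarrow> c \<le> m \<Longrightarrow> Fmat m b c = (Fmat m (m+1-c) (m+1-b) :: 'a)"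
  unfolding Fmat_def by (auto simp: mult.commute)

lemma st_Fmat: "st (Fmat m x y) = Fmat m x y"
  unfolding Fmat_def by (simp del: of_nat_mult add: st_of_nat st_zero)

lemma st_sol:
  fixes M N :: "nat \<Rightarrow> nat \<Rightarrow> nat \<Rightarrow> 'a"
  assumes S: "is_recursion_solution r M N" and rr: "\<forall>j\<ge>1. r' j = st (r j)"
  shows "is_recursion_solution r' (\<lambda>j a b. st (N j (j+2-b) (j+1-a))) (\<lambda>j a b. st (M j (j+1-b) (j+2-a)))"
proof (rule rs_intro)
  fix j a :: nat assume a: "1 \<le> a" "a \<le> j"
  show "st (N j (j+2-(a+1)) (j+1-a)) = 1" using rsN1[OF S, of "j+1-a" j] a by (simp add: st_one)
  show "st (M j (j+1-a) (j+2-a)) = 1" using rsM1[OF S, of "j+1-a" j] a by (simp add: st_one Suc_diff_le)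
next
  fix j a b :: nat assume a: "1 \<le> a" "a \<le> j" and b: "a + 1 < b" "b \<le> j + 1"
  show "st (N j (j+2-b) (j+1-a)) = 0" using rsN0[OF S, of "j+2-b" j "j+1-a"] a b by (simp add: st_zero)
next
  fix j a b :: nat assume a: "1 \<le> a" "a \<le> j + 1" and b: "a < b" "b \<le> j"
  show "st (M j (j+1-b) (j+2-a)) = 0" using rsM0[OF S, of "j+1-b" j "j+2-a"] a b by (simp add: st_zero)
next
  fix j a c :: nat assume j: "1 \<le> j" and a: "1 \<le> a" "a \<le> j" and c: "1 \<le> c" "c \<le> j"
  have L: "mmul (j + 1) (\<lambda>a b. st (N j (j+2-b) (j+1-a))) (\<lambda>a b. st (M j (j+1-b) (j+2-a))) a c
      = st (mmul (j+1) (M j) (N j) (j+1-c) (j+1-a))"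
    by (rule mmul_st) auto
  have R: "mmul (j - 1) (\<lambda>a b. st (M (j-1) (j-1+1-b) (j-1+2-a))) (\<lambda>a b. st (N (j-1) (j-1+2-b) (j-1+1-a))) a c
      = st (mmul (j-1) (N (j-1)) (M (j-1)) (j+1-c) (j+1-a))"
    by (rule mmul_st) (use j in auto)
  have B: "mmul (j+1) (M j) (N j) (j+1-c) (j+1-a) = mmul (j - 1) (N (j - 1)) (M (j - 1)) (j+1-c) (j+1-a) + (if j+1-c = j \<and> j+1-a = 1 then r j else 0)"
    by (rule rsB[OF S j]) (use a c in auto)
  have X: "st (if j+1-c = j \<and> j+1-a = 1 then r j else 0) = (if a = j \<and> c = 1 then r' j else 0)"
    using rr j a c by (auto simp: st_zero)
  show "mmul (j + 1) (\<lambda>a b. st (N j (j+2-b) (j+1-a))) (\<lambda>a b. st (M j (j+1-b) (j+2-a))) a c =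
        mmul (j - 1) (\<lambda>a b. st (M (j-1) (j-1+1-b) (j-1+2-a))) (\<lambda>a b. st (N (j-1) (j-1+2-b) (j-1+1-a))) a c +
        (if a = j \<and> c = 1 then r' j else 0)"
    unfolding L R B st_add X ..
next
  fix j a c :: nat assume j: "1 \<le> j" and a: "1 \<le> a" "a \<le> j+1" and c: "1 \<le> c" "c \<le> j+1"
  define M2 where "M2 = (\<lambda>j a b. st (N j (j+2-b) (j+1-a)))"
  define N2 where "N2 = (\<lambda>j a b. st (M j (j+1-b) (j+2-a)))"
  have P: "PP M2 N2 j x y = st (PP M N j (j+2-y) (j+2-x))" if x: "1 \<le> x" "x \<le> j+1" and y: "1 \<le> y" "y \<le> j+1" for x y
  proof -
    have "mmul j (N2 j) (M2 j) x y = st (mmul j (N j) (M j) (j+2-y) (j+2-x))"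
      unfolding M2_def N2_def by (rule mmul_st) auto
    moreover have "Emat (j+1) x y = st (Emat (j+1) (j+2-y) (j+2-x))"
      using x y by (auto simp: Emat_def st_one st_zero)
    ultimately show ?thesis unfolding PP_def st_diff by simp
  qed
  have FL: "mmul (j+1) (PP M2 N2 j) (Fmat (j+1)) a c = st (mmul (j+1) (Fmat (j+1)) (PP M N j) (j+2-c) (j+2-a))"
  proof (rule mmul_st)
    fix b assume b: "b \<in> {1..j+1}"
    show "PP M2 N2 j a b = st (PP M N j (j+1+1-b) (j+2-a))" using P[of a b] a b by simp
    show "Fmat (j+1) b c = st (Fmat (j+1) (j+2-c) (j+1+1-b))"
      using Fmat_sym[of b "j+1" c] b c by (simp add: st_Fmat)
  qed
  have FR: "mmul (j+1) (Fmat (j+1)) (PP M2 N2 j) a c = st (mmul (j+1) (PP M N j) (Fmat (j+1)) (j+2-c) (j+2-a))"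
  proof (rule mmul_st)
    fix b assume b: "b \<in> {1..j+1}"
    show "Fmat (j+1) a b = st (Fmat (j+1) (j+1+1-b) (j+2-a))"
      using Fmat_sym[of a "j+1" b] a b by (simp add: st_Fmat)
    show "PP M2 N2 j b c = st (PP M N j (j+2-c) (j+1+1-b))" using P[of b c] c b by simp
  qed
  have "mmul (j+1) (PP M N j) (Fmat (j+1)) (j+2-c) (j+2-a) = mmul (j+1) (Fmat (j+1)) (PP M N j) (j+2-c) (j+2-a)"
    by (rule rsC[OF S j]) (use a c in auto)
  then show "mmul (j+1) (PP M2 N2 j) (Fmat (j+1)) a c = mmul (j+1) (Fmat (j+1)) (PP M2 N2 j) a c"
    unfolding FL FR by simp
qed

end


theorem lemma4p7:
  fixes smul :: "complex \<Rightarrow> 'a::ring_1 \<Rightarrow> 'a"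
    and r r' :: "nat \<Rightarrow> 'a"
    and M N M' N' :: "nat \<Rightarrow> nat \<Rightarrow> nat \<Rightarrow> 'a"
  assumes "complex_algebra smul"
    and "is_recursion_solution r M N"
    and "is_recursion_solution r' M' N'"
  shows "(\<forall>lam::complex. (\<forall>j\<ge>1. r' j = smul (lam ^ j) (r j)) \<longrightarrow>
            (\<forall>j a b. 1 \<le> b \<and> b \<le> a \<and> a \<le> j \<longrightarrow>
               M' j a b = smul (lam ^ (a - b + 1)) (M j a b) \<and>
               N' j (a + 1) b = smul (lam ^ (a - b + 1)) (N j (a + 1) b))) \<and>
         (\<forall>st. anti_automorphism smul st \<and> (\<forall>j\<ge>1. r' j = st (r j)) \<longrightarrow>
            (\<forall>j a b. 1 \<le> b \<and> b \<le> a \<and> a \<le> j \<longrightarrow>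
               M' j a b = st (N j (j - b + 1 + 1) (j - a + 1)) \<and>
               N' j (a + 1) b = st (M j (j - b + 1) (j - a + 1))))"
proof (rule conjI; intro allI impI)
  fix lam :: complex and j a b :: nat
  assume H: "\<forall>j\<ge>1. r' j = smul (lam ^ j) (r j)" and abj: "1 \<le> b \<and> b \<le> a \<and> a \<le> j"
  note S3 = scaled_sol[OF assms(1) assms(2) H]
  note U = uniq[OF assms(1) assms(3) S3, where j=j]
  have "M' j a b = smul (lam ^ (a+1-b)) (M j a b)"
    using U abj by auto
  moreover have "N' j (a+1) b = smul (lam ^ (a+1-b)) (N j (a+1) b)"
    using U abj by auto
  ultimately show "M' j a b = smul (lam ^ (a - b + 1)) (M j a b) \<and>
               N' j (a + 1) b = smul (lam ^ (a - b + 1)) (N j (a + 1) b)"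
    using abj by (simp add: Suc_diff_le)
next
  fix st :: "'a \<Rightarrow> 'a" and j a b :: nat
  assume H: "anti_automorphism smul st \<and> (\<forall>j\<ge>1. r' j = st (r j))" and abj: "1 \<le> b \<and> b \<le> a \<and> a \<le> j"
  have S3: "is_recursion_solution r' (\<lambda>j a b. st (N j (j+2-b) (j+1-a))) (\<lambda>j a b. st (M j (j+1-b) (j+2-a)))"
    using st_sol[of smul st r M N r'] H assms(2) by blast
  note U = uniq[OF assms(1) assms(3) S3, where j=j]
  have "M' j a b = st (N j (j+2-b) (j+1-a))"
    using U abj by auto
  moreover have "N' j (a+1) b = st (M j (j+1-b) (j+2-(a+1)))"
    using U abj by auto
  ultimately show "M' j a b = st (N j (j - b + 1 + 1) (j - a + 1)) \<and>
               N' j (a + 1) b = st (M j (j - b + 1) (j - a + 1))"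
    using abj by (simp add: Suc_diff_le)
qed

end
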